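(* Let $j\geq1$ be an integer and $0<e<1$. Let $n$ be a positive integer with $h_j(n)>n^{-e}$. Then for every prime $p$ and integer $m\geq1$ with $p^m\parallel n$ we have $h_j(p^m)\geq \frac{1}{M_{j,e}\,(p^m)^e}$. In particular, the set $\{n\in\mathbb{N}: h_j(n)>n^{-e}\}$ is finite.
   Context: $\sigma(n)=\sum_{d\mid n}d$. For an integer $j\geq1$, a prime $p$ and $m\geq1$, put $h_j(p^m)=\sum_{k=1}^{j}\binom{j}{k}\big(p\,\sigma(p^{m-1})\big)^{-k}$, set $h_j(1)=1$, and extend $h_j$ to all positive integers multiplicatively: $h_j(n)=\prod_{p^m\parallel n}h_j(p^m)$. For $0<e<1$ let $M_{j,e}=\max_{n\in\mathbb{Z}_{\geq1}}h_j(n)\,n^{e}$ (this maximum exists and satisfies $M_{j,e}\geq1$). *)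

theory Defs
  imports "HOL-Analysis.Analysis" "HOL-Computational_Algebra.Primes"
begin

definition sigma :: "nat \<Rightarrow> nat" where
  "sigma n = (\<Sum>d | d dvd n. d)"

text \<open>h_j at a prime power p^m, m >= 1\<close>
definition hpp :: "nat \<Rightarrow> nat \<Rightarrow> nat \<Rightarrow> real" where
  "hpp j p m = (\<Sum>k=1..j. real (j choose k) * (real p * real (sigma (p ^ (m - 1)))) powi (- int k))"

definition h :: "nat \<Rightarrow> nat \<Rightarrow> real" where
  "h j n = (\<Prod>p\<in>prime_factors n. hpp j p (multiplicity p n))"

definition M :: "nat \<Rightarrow> real \<Rightarrow> real" where
  "M j e = (SUP n\<in>{1::nat..}. h j n * real n powr e)"

definition exactly_divides :: "nat \<Rightarrow> nat \<Rightarrow> nat \<Rightarrow> bool" where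
  "exactly_divides p m n \<longleftrightarrow> p ^ m dvd n \<and> \<not> p ^ (Suc m) dvd n"

end

theory Submission
  imports Defs
begin

lemma sigma_ge: "n > 0 \<Longrightarrow> n \<le> sigma n"
  unfolding sigma_def by (rule member_le_sum) auto

lemma hpp_nonneg: "0 \<le> hpp j p m"
  unfolding hpp_def by (intro sum_nonneg mult_nonneg_nonneg) (auto simp: power_int_minus)

lemma hpp_le:
  assumes "prime p" "m \<ge> 1"
  shows "hpp j p m \<le> 2^j / real (p^m)"
proof -
  define y where "y = real p * real (sigma (p ^ (m - 1)))"
  have "real p \<ge> 1" using prime_ge_1_nat[OF assms(1)] by simp
  hence pm: "real (p^m) \<ge> 1" by (simp add: one_le_power)
  have "real (p^(m-1)) \<le> real (sigma (p^(m-1)))"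
    using sigma_ge[of "p^(m-1)"] assms prime_gt_0_nat by simp
  hence "real p * real (p^(m-1)) \<le> y" unfolding y_def by (intro mult_left_mono) auto
  moreover have "real p * real (p^(m-1)) = real (p^m)"
    using assms by (metis Suc_diff_le diff_Suc_1 of_nat_mult power_Suc)
  ultimately have yge: "real (p^m) \<le> y" by simp
  hence y1: "y \<ge> 1" using pm by simp
  have "hpp j p m = (\<Sum>k=1..j. real (j choose k) / y ^ k)"
    unfolding hpp_def y_def by (intro sum.cong) (auto simp: power_int_minus divide_inverse)
  also have "\<dots> \<le> (\<Sum>k=1..j. real (j choose k) / y)"
  proof (intro sum_mono divide_left_mono)
    fix k assume "k \<in> {1..j}"
    then show "y \<le> y ^ k" using y1
      by (metis atLeastAtMost_iff power_one_right power_increasing)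
  qed (use y1 in auto)
  also have "\<dots> = (\<Sum>k=1..j. real (j choose k)) / y" by (simp add: sum_divide_distrib)
  also have "(\<Sum>k=1..j. real (j choose k)) \<le> (\<Sum>k\<le>j. real (j choose k))"
    by (intro sum_mono2) auto
  also have "\<dots> = 2^j" using choose_row_sum[of j] by (metis of_nat_numeral of_nat_power of_nat_sum)
  finally have "hpp j p m \<le> 2^j / y" using y1 by (simp add: divide_right_mono)
  also have "\<dots> \<le> 2^j / real (p^m)" using yge pm by (intro divide_left_mono) (auto, smt (verit) mult_pos_pos)
  finally show ?thesis .
qed

lemma h_powr:
  assumes "n > 0"
  shows "h j n * real n powr e =
    (\<Prod>p\<in>prime_factors n. hpp j p (multiplicity p n) * real (p ^ multiplicity p n) powr e)"
proof -
  have "real n powr e = (\<Prod>p\<in>prime_factors n. real (p ^ multiplicity p n)) powr e"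
    by (subst prime_factorization_nat[OF assms]) simp
  also have "\<dots> = (\<Prod>p\<in>prime_factors n. real (p ^ multiplicity p n) powr e)"
    by (rule prod_powr_distrib)
  finally show ?thesis unfolding h_def by (simp add: prod.distrib)
qed

lemma factor_bound:
  assumes "prime p" "m \<ge> 1" "0 \<le> e" "e < 1"
  shows "hpp j p m * real (p^m) powr e \<le> 2^j * real (p^m) powr (e - 1)"
proof -
  define q where "q = real (p^m)"
  have q1: "q \<ge> 1" unfolding q_def using prime_ge_1_nat[OF assms(1)] by (simp add: one_le_power)
  have "hpp j p m * q powr e \<le> 2^j / q * q powr e"
    using hpp_le[OF assms(1,2)] unfolding q_def by (intro mult_right_mono) auto
  also have "\<dots> = 2^j * q powr (e - 1)" using q1 by (simp add: powr_diff)
  finally show ?thesis unfolding q_def .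
qed

lemma h_bounded:
  assumes "0 \<le> e" "e < 1"
  shows "\<exists>B. \<forall>n>0. h j n * real n powr e \<le> B"
proof -
  define K where "K = nat \<lceil>2 powr (real j / (1 - e))\<rceil>"
  define g where "g = (\<lambda>p::nat. if p < K then (2::real)^j else 1)"
  have Kge: "real K powr (1 - e) \<ge> 2^j"
  proof -
    have "real K \<ge> 2 powr (real j / (1 - e))" unfolding K_def by linarith
    hence "real K powr (1 - e) \<ge> (2 powr (real j / (1 - e))) powr (1 - e)"
      using assms by (intro powr_mono2) auto
    also have "(2 powr (real j / (1 - e))) powr (1 - e) = 2 ^ j"
      using assms by (simp add: powr_powr powr_realpow)
    finally show ?thesis .
  qed
  have fb: "hpp j p m * real (p^m) powr e \<le> g p" if "prime p" "m \<ge> 1" for p m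
  proof -
    define q where "q = real (p^m)"
    have q1: "q \<ge> 1" unfolding q_def using prime_ge_1_nat[OF that(1)] by (simp add: one_le_power)
    have le: "hpp j p m * q powr e \<le> 2^j * q powr (e - 1)"
      using factor_bound[OF that assms] unfolding q_def .
    show ?thesis
    proof (cases "p < K")
      case True
      have "q powr (e - 1) \<le> q powr 0" using q1 assms by (intro powr_mono) auto
      hence "2^j * q powr (e - 1) \<le> 2^j" using q1 by simp
      hence "hpp j p m * q powr e \<le> 2^j" using le by linarith
      thus ?thesis using True unfolding g_def q_def by simp
    next
      case False
      have "p \<le> p^m" using that prime_gt_0_nat[OF that(1)] by (simp add: self_le_power)
      hence "real p \<le> q" unfolding q_def by (simp only: of_nat_le_iff)
      hence "real K \<le> q" using False by linarith
      hence "real K powr (1 - e) \<le> q powr (1 - e)" using assms by (intro powr_mono2) auto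
      hence qq: "2^j \<le> q powr (1 - e)" using Kge by linarith
      have "q powr (e - 1) = 1 / q powr (1 - e)" using q1 by (simp add: powr_minus_divide[symmetric])
      hence "2^j * q powr (e - 1) \<le> 1" using qq q1
        by (simp add: divide_le_eq)
      thus ?thesis using le False unfolding g_def q_def by simp
    qed
  qed
  have "h j n * real n powr e \<le> (2^j)^K" if "n > 0" for n
  proof -
    have "h j n * real n powr e \<le> (\<Prod>p\<in>prime_factors n. g p)"
      unfolding h_powr[OF that]
    proof (intro prod_mono conjI)
      fix p assume "p \<in> prime_factors n"
      hence "prime p" "multiplicity p n \<ge> 1" using that
        by (auto simp: prime_factors_multiplicity)
      thus "hpp j p (multiplicity p n) * real (p ^ multiplicity p n) powr e \<le> g p" by (rule fb)
    qed (simp add: hpp_nonneg)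
    also have "(\<Prod>p\<in>prime_factors n. g p) = (\<Prod>p\<in>prime_factors n \<inter> {..<K}. g p) * (\<Prod>p\<in>prime_factors n - {..<K}. g p)"
      by (rule prod.Int_Diff) simp
    also have "(\<Prod>p\<in>prime_factors n - {..<K}. g p) = 1" unfolding g_def by (intro prod.neutral) auto
    also have "(\<Prod>p\<in>prime_factors n \<inter> {..<K}. g p) = (2^j)^card (prime_factors n \<inter> {..<K})"
      unfolding g_def by simp
    also have "\<dots> \<le> (2^j)^K"
    proof (rule power_increasing)
      have "card (prime_factors n \<inter> {..<K}) \<le> card {..<K}" by (intro card_mono) auto
      thus "card (prime_factors n \<inter> {..<K}) \<le> K" by simp
    qed simp
    finally show ?thesis by simp
  qed
  thus ?thesis by blast
qed

lemma h_one [simp]: "h j (Suc 0) = 1" unfolding h_def by simp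

theorem lemma5p2:
  fixes j n :: nat and e :: real
  assumes "j \<ge> 1" and "0 < e" and "e < 1"
    and "n \<ge> 1" and "h j n > real n powr (- e)"
  shows "(\<forall>p m. prime p \<and> m \<ge> 1 \<and> exactly_divides p m n \<longrightarrow>
            hpp j p m \<ge> 1 / (M j e * real (p ^ m) powr e))
         \<and> finite {n::nat. n \<ge> 1 \<and> h j n > real n powr (- e)}"
proof
  define F where "F = (\<lambda>n::nat. h j n * real n powr e)"
  obtain B where B: "\<And>n. n > 0 \<Longrightarrow> F n \<le> B"
    using h_bounded[of e j] assms unfolding F_def by auto
  have bdd: "bdd_above (F ` {1..})" by (rule bdd_aboveI2[where M=B]) (use B in auto)
  have FM: "F r \<le> M j e" if "r \<ge> 1" for r
    unfolding M_def F_def[symmetric] using bdd that by (intro cSUP_upper) auto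
  have M1: "M j e \<ge> 1" using FM[of 1] unfolding F_def by (simp add: h_one)
  have Fn: "F n > 1"
  proof -
    have "real n powr (-e) * real n powr e = 1" using assms(4)
      by (simp add: powr_add[symmetric])
    moreover have "real n powr (-e) * real n powr e < h j n * real n powr e"
      using assms(4,5) by (intro mult_strict_right_mono) auto
    ultimately show ?thesis unfolding F_def by simp
  qed
  show "\<forall>p m. prime p \<and> m \<ge> 1 \<and> exactly_divides p m n \<longrightarrow>
            hpp j p m \<ge> 1 / (M j e * real (p ^ m) powr e)"
  proof (intro allI impI, elim conjE)
    fix p m assume p: "prime p" and m: "m \<ge> 1" and ex: "exactly_divides p m n"
    have dv: "p^m dvd n" and ndv: "\<not> p^Suc m dvd n" using ex unfolding exactly_divides_def by auto
    have mult: "multiplicity p n = m" using multiplicity_eqI[OF dv ndv] .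
    define r where "r = n div p^m"
    have nr: "n = p^m * r" unfolding r_def using dv by simp
    have r0: "r > 0" using nr assms(4) by (cases "r = 0") auto
    have pm0: "p^m > 0" using p prime_gt_0_nat by simp
    have npr: "\<not> p dvd r"
    proof
      assume "p dvd r"
      then obtain s where "r = p * s" by auto
      hence "n = p^Suc m * s" using nr by simp
      thus False using ndv by simp
    qed
    have PF: "prime_factors n = insert p (prime_factors r)"
      using nr r0 pm0 p m by (simp add: prime_factors_product prime_factorization_prime_power)
    have pnot: "p \<notin> prime_factors r" using npr by auto
    have mq: "multiplicity q n = multiplicity q r" if "q \<in> prime_factors r" for q
    proof -
      have q: "prime q" using that by auto
      have "q \<noteq> p" using that pnot by auto
      hence "multiplicity q (p^m) = 0" using p q by (simp add: multiplicity_distinct_prime_power)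
      thus ?thesis using nr r0 pm0 q by (simp add: prime_elem_multiplicity_mult_distrib)
    qed
    have "F n = hpp j p m * real (p^m) powr e * F r"
      unfolding F_def h_powr[OF r0] using assms(4)
      apply (subst h_powr, simp)
      apply (simp only: PF prod.insert[OF finite_set_mset pnot] mult)
      apply (intro arg_cong2[where f="(*)"] refl prod.cong)
      by (simp_all add: mq)
    also have "\<dots> \<le> hpp j p m * real (p^m) powr e * M j e"
      using FM[of r] r0 by (intro mult_left_mono) (auto simp: hpp_nonneg)
    finally have "1 < hpp j p m * (M j e * real (p^m) powr e)" using Fn by (simp add: ac_simps)
    moreover have "M j e * real (p^m) powr e > 0" using M1 pm0 by simp
    ultimately show "hpp j p m \<ge> 1 / (M j e * real (p ^ m) powr e)"
      by (simp add: divide_le_eq)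
  qed
next
  define e' where "e' = (1 + e) / 2"
  define d where "d = e' - e"
  have d: "d > 0" unfolding d_def e'_def using assms by simp
  obtain B where B: "\<And>n. n > 0 \<Longrightarrow> h j n * real n powr e' \<le> B"
    using h_bounded[of e' j] assms unfolding e'_def by auto
  have "{n::nat. n \<ge> 1 \<and> h j n > real n powr (- e)} \<subseteq> {..nat \<lceil>B powr (1/d)\<rceil>}"
  proof
    fix k assume "k \<in> {n::nat. n \<ge> 1 \<and> h j n > real n powr (- e)}"
    hence k: "k \<ge> 1" "h j k > real k powr (- e)" by auto
    have "real k powr d = real k powr (-e) * real k powr e'"
      using k(1) unfolding d_def by (simp add: powr_add[symmetric])
    also have "\<dots> \<le> h j k * real k powr e'"
      using k by (intro mult_right_mono) auto
    also have "\<dots> \<le> B" using B k by auto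
    finally have kd: "real k powr d \<le> B" .
    have "real k = (real k powr d) powr (1/d)" using d k by (simp add: powr_powr)
    also have "\<dots> \<le> B powr (1/d)" using kd d by (intro powr_mono2) auto
    finally show "k \<in> {..nat \<lceil>B powr (1/d)\<rceil>}" by simp linarith
  qed
  thus "finite {n::nat. n \<ge> 1 \<and> h j n > real n powr (- e)}" by (rule finite_subset) simp
qed

end
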